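(* In the setting of the EM iteration $\mathbf p_{n+1}=T(\mathbf p_n)$ with $$T(\mathbf p)_j=(n+m)^{-1}\Big(\xi_j+\frac{p_j}{W(t_j)}\sum_{k\le j}\frac{\zeta_k}{\sum_{l\ge k}p_l/W(t_l)}\Big)$$ for maximizing $\mathcal L(\mathbf p)=\prod_{j=1}^h p_j^{\xi_j}\big(\sum_{k\ge j} p_k/W(t_k)\big)^{\zeta_j}$ over the probability simplex (where $0<t_1<\dots<t_h$, $W$ positive nondecreasing, $\xi_j,\zeta_j$ nonnegative integers with $\xi_j+\zeta_j\ge1$, $m=\sum\xi_j$, $n=\sum\zeta_j$), suppose the (unique) maximizer $\mathbf p^*$ of $\mathcal L$ over the simplex satisfies $p^*_j>0$ for all $j=1,\dots,h$. Then for any starting point $\mathbf p_0$ in the simplex with all coordinates positive, the iterates $\mathbf p_n$ converge to $\mathbf p^*$.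
   Context: $\xi_j,\zeta_j$ are the multiplicities of uncensored and censored observations at $t_j$; $\mathbf p$ gives the masses at $t_1,\dots,t_h$ of a discrete distribution. *)

theory Defs
  imports "HOL-Analysis.Analysis"
begin

text \<open>Indices run over 1..h. A point p : nat => real is meaningful on 1..h only.\<close>

definition em_simplex :: "nat \<Rightarrow> (nat \<Rightarrow> real) set" where
  "em_simplex h = {p. (\<forall>j\<in>{1..h}. 0 \<le> p j) \<and> (\<Sum>j=1..h. p j) = 1}"

definition em_tail :: "nat \<Rightarrow> (nat \<Rightarrow> real) \<Rightarrow> (real \<Rightarrow> real) \<Rightarrow> (nat \<Rightarrow> real) \<Rightarrow> nat \<Rightarrow> real" where
  "em_tail h t W p k = (\<Sum>l=k..h. p l / W (t l))"

definition em_lik :: "nat \<Rightarrow> (nat \<Rightarrow> real) \<Rightarrow> (real \<Rightarrow> real) \<Rightarrow> (nat \<Rightarrow> nat) \<Rightarrow> (nat \<Rightarrow> nat)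
    \<Rightarrow> (nat \<Rightarrow> real) \<Rightarrow> real" where
  "em_lik h t W xi zeta p = (\<Prod>j=1..h. p j ^ xi j * em_tail h t W p j ^ zeta j)"

definition em_T :: "nat \<Rightarrow> (nat \<Rightarrow> real) \<Rightarrow> (real \<Rightarrow> real) \<Rightarrow> (nat \<Rightarrow> nat) \<Rightarrow> (nat \<Rightarrow> nat)
    \<Rightarrow> (nat \<Rightarrow> real) \<Rightarrow> (nat \<Rightarrow> real)" where
  "em_T h t W xi zeta p = (\<lambda>j. (xi j + p j / W (t j) *
      (\<Sum>k=1..j. real (zeta k) / em_tail h t W p k))
      / (real (\<Sum>i=1..h. zeta i) + real (\<Sum>i=1..h. xi i)))"

end

theory Submission
  imports Defs
begin

lemma sum_swap_tri:
  fixes f :: "nat \<Rightarrow> nat \<Rightarrow> real"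
  shows "(\<Sum>j=1..h. \<Sum>k=1..j. f k j) = (\<Sum>k=1..h. \<Sum>j=k..h. f k j)"
proof (induction h)
  case 0 then show ?case by simp
next
  case (Suc h)
  have "(\<Sum>j=1..Suc h. \<Sum>k=1..j. f k j) = (\<Sum>j=1..h. \<Sum>k=1..j. f k j) + (\<Sum>k=1..Suc h. f k (Suc h))"
    by simp
  also have "\<dots> = (\<Sum>k=1..h. \<Sum>j=k..h. f k j) + (\<Sum>k=1..Suc h. f k (Suc h))" using Suc by simp
  also have "\<dots> = (\<Sum>k=1..h. (\<Sum>j=k..h. f k j) + f k (Suc h)) + f (Suc h) (Suc h)"
    by (simp add: sum.distrib)
  also have "\<dots> = (\<Sum>k=1..h. \<Sum>j=k..Suc h. f k j) + (\<Sum>j=Suc h..Suc h. f (Suc h) j)"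
    by (intro arg_cong2[where f="(+)"] sum.cong) auto
  also have "\<dots> = (\<Sum>k=1..Suc h. \<Sum>j=k..Suc h. f k j)" by simp
  finally show ?case .
qed

lemma eq2: fixes a b c d :: real
  assumes "0 < a" "a \<le> c" "0 < b" "b \<le> d" "a * b = c * d" shows "a = c \<and> b = d"
proof -
  have "a = c"
  proof (rule ccontr)
    assume "a \<noteq> c" then have "a < c" using assms(2) by linarith
    then have "a * b < c * b" using assms(3) by (rule mult_strict_right_mono)
    also have "\<dots> \<le> c * d" using assms(1,2,4) by (intro mult_left_mono) auto
    finally have "a * b < c * d" .
    then show False using assms(5) by simp
  qed
  moreover have "b = d"
  proof -
    have "a * b = a * d" using assms(5) \<open>a = c\<close> by simp
    then show ?thesis using assms(1) by simp
  qed
  ultimately show ?thesis by blast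
qed

lemma prod_eq_factors: fixes f g :: "'a \<Rightarrow> real"
  assumes "finite A" "\<forall>i\<in>A. 0 < g i \<and> g i \<le> f i" "prod g A = prod f A"
  shows "\<forall>i\<in>A. g i = f i"
  using assms
proof (induction A rule: finite_induct)
  case empty then show ?case by simp
next
  case (insert x F)
  have F: "\<forall>i\<in>F. 0 < g i \<and> g i \<le> f i" using insert.prems(1) by blast
  have a: "0 < prod g F" using F by (intro prod_pos) blast
  have b: "prod g F \<le> prod f F" using F by (intro prod_mono) (blast intro: less_imp_le)
  have c: "g x * prod g F = f x * prod f F" using insert.prems(2) insert.hyps by simp
  have d: "0 < g x" "g x \<le> f x" using insert.prems(1) by auto
  have e: "g x = f x \<and> prod g F = prod f F" using eq2[OF d(1) d(2) a b c] .
  have "\<forall>i\<in>F. g i = f i" using insert.IH F e by blast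
  then show ?case using e by blast
qed

lemma bw_one: fixes Y :: "nat \<Rightarrow> real" assumes "\<forall>n. \<bar>Y n\<bar> \<le> B"
  shows "\<exists>r. strict_mono r \<and> convergent (\<lambda>n. Y (r n))"
proof -
  obtain r where r: "strict_mono r" "monoseq (\<lambda>n. Y (r n))" using seq_monosub by blast
  have "Bseq (\<lambda>n. Y (r n))" using assms by (intro BseqI'[of _ B]) auto
  then have "convergent (\<lambda>n. Y (r n))" using r(2) by (rule Bseq_monoseq_convergent)
  then show ?thesis using r(1) by blast
qed

lemma bw_multi: fixes X :: "nat \<Rightarrow> nat \<Rightarrow> real" assumes "\<forall>n j. \<bar>X n j\<bar> \<le> B"
  shows "\<exists>r. strict_mono r \<and> (\<forall>j\<le>H. convergent (\<lambda>n. X (r n) j))"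
proof (induction H)
  case 0
  obtain r where "strict_mono r" "convergent (\<lambda>n. X (r n) 0)" using bw_one[of "\<lambda>n. X n 0" B] assms by blast
  then show ?case by auto
next
  case (Suc H)
  obtain r where r: "strict_mono r" "\<forall>j\<le>H. convergent (\<lambda>n. X (r n) j)" using Suc by blast
  obtain s where s: "strict_mono s" "convergent (\<lambda>n. X (r (s n)) (Suc H))"
    using bw_one[of "\<lambda>n. X (r n) (Suc H)" B] assms by blast
  have "convergent (\<lambda>n. X (r (s n)) j)" if "j \<le> Suc H" for j
  proof (cases "j = Suc H")
    case True then show ?thesis using s by simp
  next
    case False
    then have "convergent (\<lambda>n. X (r n) j)" using r that by auto
    then have "convergent ((\<lambda>n. X (r n) j) \<circ> s)" using s(1) by (rule convergent_subseq_convergent)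
    then show ?thesis by (simp add: o_def)
  qed
  moreover have "strict_mono (r \<circ> s)" using r(1) s(1) by (rule strict_mono_o)
  ultimately show ?case by (auto simp: o_def)
qed

locale emloc =
  fixes h :: nat and t :: "nat \<Rightarrow> real" and W :: "real \<Rightarrow> real" and xi zeta :: "nat \<Rightarrow> nat"
  assumes Wp: "\<And>j. j \<in> {1..h} \<Longrightarrow> 0 < W (t j)"
    and obs: "\<And>j. j \<in> {1..h} \<Longrightarrow> 1 \<le> xi j + zeta j"
begin

abbreviation S where "S p k \<equiv> em_tail h t W p k"
abbreviation T where "T \<equiv> em_T h t W xi zeta"
abbreviation L where "L \<equiv> em_lik h t W xi zeta"
definition N :: real where "N = real (\<Sum>i=1..h. zeta i) + real (\<Sum>i=1..h. xi i)"
definition pos :: "(nat \<Rightarrow> real) \<Rightarrow> bool" where "pos p \<longleftrightarrow> (\<forall>j\<in>{1..h}. 0 < p j)"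

lemma T_eq: "T p j = (xi j + p j / W (t j) * (\<Sum>k=1..j. real (zeta k) / S p k)) / N"
  unfolding em_T_def N_def by simp

lemma N_pos: assumes "1 \<le> h" shows "0 < N"
proof -
  have "1 \<le> xi 1 + zeta 1" using obs assms by auto
  also have "xi 1 + zeta 1 \<le> (\<Sum>i=1..h. xi i) + (\<Sum>i=1..h. zeta i)"
    using assms by (intro add_mono member_le_sum) auto
  finally show ?thesis unfolding N_def by linarith
qed

lemma S_pos: assumes "pos p" "k \<in> {1..h}" shows "0 < S p k"
  unfolding em_tail_def using assms Wp by (intro sum_pos) (auto simp: pos_def)

lemma S_nonneg: assumes "\<forall>j\<in>{1..h}. 0 \<le> p j" "1 \<le> k" shows "0 \<le> S p k"
  unfolding em_tail_def using assms Wp by (intro sum_nonneg) (auto intro!: divide_nonneg_pos)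

lemma A_nonneg: assumes "pos p" "j \<le> h" shows "0 \<le> (\<Sum>k=1..j. real (zeta k) / S p k)"
  using assms S_pos by (intro sum_nonneg) (auto intro!: divide_nonneg_pos)

lemma T_pos: assumes "pos p" "j \<in> {1..h}" shows "0 < T p j"
proof -
  have hp: "0 < N" using assms N_pos by auto
  have pj: "0 < p j / W (t j)" using assms Wp by (auto simp: pos_def)
  have A: "0 \<le> (\<Sum>k=1..j. real (zeta k) / S p k)" using A_nonneg assms by auto
  have "0 < real (xi j) + p j / W (t j) * (\<Sum>k=1..j. real (zeta k) / S p k)"
  proof (cases "xi j = 0")
    case True
    then have z: "1 \<le> zeta j" using obs assms by fastforce
    have "0 < real (zeta j) / S p j" using z S_pos assms by auto
    also have "\<dots> \<le> (\<Sum>k=1..j. real (zeta k) / S p k)"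
      using assms S_pos by (intro member_le_sum) (auto intro!: divide_nonneg_pos)
    finally have "0 < (\<Sum>k=1..j. real (zeta k) / S p k)" .
    then have "0 < p j / W (t j) * (\<Sum>k=1..j. real (zeta k) / S p k)" using pj by (rule mult_pos_pos[rotated])
    then show ?thesis by (simp add: add_nonneg_pos)
  next
    case False
    have "0 \<le> p j / W (t j) * (\<Sum>k=1..j. real (zeta k) / S p k)" using pj A by (intro mult_nonneg_nonneg) auto
    then show ?thesis using False by linarith
  qed
  then show ?thesis unfolding T_eq using hp by simp
qed

lemma T_sum: assumes "pos p" "(\<Sum>j=1..h. p j) = 1" "1 \<le> h" shows "(\<Sum>j=1..h. T p j) = 1"
proof -
  have "(\<Sum>j=1..h. p j / W (t j) * (\<Sum>k=1..j. real (zeta k) / S p k))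
      = (\<Sum>j=1..h. \<Sum>k=1..j. real (zeta k) / S p k * (p j / W (t j)))"
    by (simp add: sum_distrib_left mult.commute)
  also have "\<dots> = (\<Sum>k=1..h. \<Sum>j=k..h. real (zeta k) / S p k * (p j / W (t j)))"
    by (rule sum_swap_tri)
  also have "\<dots> = (\<Sum>k=1..h. real (zeta k) / S p k * S p k)"
    by (intro sum.cong refl) (simp only: em_tail_def sum_distrib_left)
  also have "\<dots> = (\<Sum>k=1..h. real (zeta k))"
    using S_pos assms by (intro sum.cong) (auto simp: less_imp_neq[symmetric])
  finally have e: "(\<Sum>j=1..h. p j / W (t j) * (\<Sum>k=1..j. real (zeta k) / S p k)) = (\<Sum>k=1..h. real (zeta k))" .
  have "(\<Sum>j=1..h. T p j) = (\<Sum>j=1..h. real (xi j) + p j / W (t j) * (\<Sum>k=1..j. real (zeta k) / S p k)) / N"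
    unfolding T_eq by (simp add: sum_divide_distrib)
  also have "\<dots> = N / N" unfolding sum.distrib e N_def by simp
  finally show ?thesis using N_pos assms by simp
qed

lemma L_pos: assumes "pos p" shows "0 < L p"
  unfolding em_lik_def
proof (intro prod_pos)
  fix j assume j: "j \<in> {1..h}"
  then have "0 < p j" "0 < S p j" using assms S_pos by (auto simp: pos_def)
  then show "0 < p j ^ xi j * S p j ^ zeta j" by simp
qed

lemma lnL: assumes "pos p"
  shows "ln (L p) = (\<Sum>j=1..h. real (xi j) * ln (p j) + real (zeta j) * ln (S p j))"
proof -
  have f: "0 < p j \<and> 0 < S p j" if "j \<in> {1..h}" for j using that assms S_pos by (auto simp: pos_def)
  have "ln (L p) = (\<Sum>j=1..h. ln (p j ^ xi j * S p j ^ zeta j))"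
    unfolding em_lik_def using f by (intro ln_prod) force+
  also have "\<dots> = (\<Sum>j=1..h. real (xi j) * ln (p j) + real (zeta j) * ln (S p j))"
    using f by (intro sum.cong refl) (force simp: ln_mult ln_realpow)
  finally show ?thesis .
qed

lemma key:
  assumes P: "pos P" "(\<Sum>j=1..h. P j) = 1" and p: "pos p" "(\<Sum>j=1..h. p j) = 1" and h: "1 \<le> h"
  shows "ln (L P) - ln (L p) \<le> N * (\<Sum>j=1..h. T P j * (ln (T p j) - ln (p j)))"
proof -
  define y where "y = T p"
  define r where "r = T P"
  define c where "c k j = real (zeta k) * (P j / W (t j) / S P k)" for k j
  define G where "G j = real (xi j) * (ln (y j) - ln (P j)) +
      (\<Sum>k=1..j. c k j * (ln (y j) - ln (p j) - ln (S P k) + ln (S p k)))" for j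
  have Np: "0 < N" using N_pos h by auto
  have Gge: "N * r j - N * P j \<le> G j" if j: "j \<in> {1..h}" for j
  proof -
    have yp: "0 < y j" unfolding y_def using T_pos p j by auto
    have Pj: "0 < P j" "0 < p j" using P p j by (auto simp: pos_def)
    have Wj: "0 < W (t j)" using Wp j by auto
    have Nr: "N * r j = real (xi j) + (\<Sum>k=1..j. c k j)"
      unfolding r_def T_eq c_def using Np by (simp add: sum_distrib_left mult.commute)
    have Ny: "N * y j = real (xi j) + p j / W (t j) * (\<Sum>k=1..j. real (zeta k) / S p k)"
      unfolding y_def T_eq using Np by simp
    have x1: "real (xi j) * (1 - P j / y j) \<le> real (xi j) * (ln (y j) - ln (P j))"
    proof -
      have "ln (P j / y j) \<le> P j / y j - 1" using yp Pj by (intro ln_le_minus_one) auto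
      then have "1 - P j / y j \<le> ln (y j) - ln (P j)" using yp Pj by (simp add: ln_div)
      then show ?thesis by (intro mult_left_mono) auto
    qed
    have x2: "c k j - real (zeta k) * (P j / y j) * (p j / W (t j) / S p k)
        \<le> c k j * (ln (y j) - ln (p j) - ln (S P k) + ln (S p k))" if k: "k \<in> {1..j}" for k
    proof -
      have kh: "k \<in> {1..h}" using k j by auto
      have SP: "0 < S P k" "0 < S p k" using S_pos kh P p by auto
      define z where "z = p j * S P k / (y j * S p k)"
      have zp: "0 < z" unfolding z_def using SP yp Pj by auto
      have "ln z \<le> z - 1" using zp by (rule ln_le_minus_one)
      moreover have "ln z = ln (p j) + ln (S P k) - ln (y j) - ln (S p k)"
        unfolding z_def using SP yp Pj by (simp add: ln_div ln_mult)
      ultimately have "1 - z \<le> ln (y j) - ln (p j) - ln (S P k) + ln (S p k)" by linarith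
      moreover have cn: "0 \<le> c k j" unfolding c_def using SP Pj Wj by auto
      ultimately have "c k j * (1 - z) \<le> c k j * (ln (y j) - ln (p j) - ln (S P k) + ln (S p k))"
        by (intro mult_left_mono) auto
      moreover have "c k j * (1 - z) = c k j - real (zeta k) * (P j / y j) * (p j / W (t j) / S p k)"
        unfolding c_def z_def using SP yp Pj Wj by (simp add: field_simps)
      ultimately show ?thesis by simp
    qed
    have "(\<Sum>k=1..j. c k j - real (zeta k) * (P j / y j) * (p j / W (t j) / S p k))
        \<le> (\<Sum>k=1..j. c k j * (ln (y j) - ln (p j) - ln (S P k) + ln (S p k)))"
      by (intro sum_mono x2)
    moreover have "(\<Sum>k=1..j. c k j - real (zeta k) * (P j / y j) * (p j / W (t j) / S p k))
        = (\<Sum>k=1..j. c k j) - P j / y j * (p j / W (t j) * (\<Sum>k=1..j. real (zeta k) / S p k))"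
      by (simp add: sum_subtractf sum_distrib_left mult_ac)
    ultimately have x3: "(\<Sum>k=1..j. c k j) - P j / y j * (p j / W (t j) * (\<Sum>k=1..j. real (zeta k) / S p k))
        \<le> (\<Sum>k=1..j. c k j * (ln (y j) - ln (p j) - ln (S P k) + ln (S p k)))" by simp
    have "P j / y j * (N * y j) = N * P j" using yp by simp
    then have "P j / y j * (real (xi j) + p j / W (t j) * (\<Sum>k=1..j. real (zeta k) / S p k)) = N * P j"
      unfolding Ny .
    then have "N * r j - N * P j = real (xi j) * (1 - P j / y j) +
         ((\<Sum>k=1..j. c k j) - P j / y j * (p j / W (t j) * (\<Sum>k=1..j. real (zeta k) / S p k)))"
      unfolding Nr by (simp add: algebra_simps)
    then show ?thesis unfolding G_def using x1 x3 by linarith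
  qed
  have "(\<Sum>j=1..h. N * r j - N * P j) \<le> (\<Sum>j=1..h. G j)" by (intro sum_mono Gge)
  moreover have "(\<Sum>j=1..h. N * r j - N * P j) = 0"
    unfolding sum_subtractf sum_distrib_left[symmetric] r_def using T_sum P h by simp
  ultimately have G0: "0 \<le> (\<Sum>j=1..h. G j)" by simp
  have Gj: "G j = N * r j * (ln (y j) - ln (p j)) - real (xi j) * (ln (P j) - ln (p j))
      - (\<Sum>k=1..j. c k j * (ln (S P k) - ln (S p k)))" if j: "j \<in> {1..h}" for j
  proof -
    have Nr: "N * r j = real (xi j) + (\<Sum>k=1..j. c k j)"
      unfolding r_def T_eq c_def using Np by (simp add: sum_distrib_left mult.commute)
    show ?thesis unfolding G_def Nr
      by (simp add: algebra_simps sum.distrib sum_subtractf sum_distrib_left sum_distrib_right)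
  qed
  have cs: "(\<Sum>j=1..h. \<Sum>k=1..j. c k j * (ln (S P k) - ln (S p k)))
      = (\<Sum>k=1..h. real (zeta k) * (ln (S P k) - ln (S p k)))"
  proof -
    have "(\<Sum>j=1..h. \<Sum>k=1..j. c k j * (ln (S P k) - ln (S p k)))
       = (\<Sum>k=1..h. \<Sum>j=k..h. c k j * (ln (S P k) - ln (S p k)))" by (rule sum_swap_tri)
    also have "\<dots> = (\<Sum>k=1..h. real (zeta k) * (ln (S P k) - ln (S p k)))"
    proof (intro sum.cong refl)
      fix k assume k: "k \<in> {1..h}"
      have SP: "0 < S P k" using S_pos k P by auto
      have "(\<Sum>j=k..h. c k j * (ln (S P k) - ln (S p k)))
          = real (zeta k) * (ln (S P k) - ln (S p k)) / S P k * S P k"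
        unfolding c_def em_tail_def by (simp add: sum_distrib_left sum_distrib_right sum_divide_distrib mult_ac)
      then show "(\<Sum>j=k..h. c k j * (ln (S P k) - ln (S p k))) = real (zeta k) * (ln (S P k) - ln (S p k))"
        using SP by simp
    qed
    finally show ?thesis .
  qed
  have "(\<Sum>j=1..h. G j) = (\<Sum>j=1..h. N * r j * (ln (y j) - ln (p j)) - real (xi j) * (ln (P j) - ln (p j))
      - (\<Sum>k=1..j. c k j * (ln (S P k) - ln (S p k))))" by (rule sum.cong[OF refl Gj])
  also have "\<dots> = N * (\<Sum>j=1..h. r j * (ln (y j) - ln (p j))) - (\<Sum>j=1..h. real (xi j) * (ln (P j) - ln (p j)))
      - (\<Sum>k=1..h. real (zeta k) * (ln (S P k) - ln (S p k)))"
    unfolding sum_subtractf cs by (simp add: sum_distrib_left mult.assoc)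
  also have "\<dots> = N * (\<Sum>j=1..h. r j * (ln (y j) - ln (p j))) - (ln (L P) - ln (L p))"
    unfolding lnL[OF P(1)] lnL[OF p(1)] by (simp add: sum.distrib sum_subtractf algebra_simps)
  finally have "(\<Sum>j=1..h. G j) = N * (\<Sum>j=1..h. r j * (ln (y j) - ln (p j))) - (ln (L P) - ln (L p))" .
  then show ?thesis using G0 unfolding r_def y_def by simp
qed

lemma gibbs: assumes "pos r" "pos p" "(\<Sum>j=1..h. r j) = 1" "(\<Sum>j=1..h. p j) = 1"
  shows "(\<Sum>j=1..h. r j * ln (p j)) \<le> (\<Sum>j=1..h. r j * ln (r j))"
proof -
  have "r j * ln (p j) - r j * ln (r j) \<le> p j - r j" if j: "j \<in> {1..h}" for j
  proof -
    have rp: "0 < r j" "0 < p j" using assms j by (auto simp: pos_def)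
    have "ln (p j / r j) \<le> p j / r j - 1" using rp by (intro ln_le_minus_one) auto
    then have "r j * ln (p j / r j) \<le> r j * (p j / r j - 1)" using rp by (intro mult_left_mono) auto
    moreover have "ln (p j / r j) = ln (p j) - ln (r j)" using rp by (simp add: ln_div)
    moreover have "r j * (p j / r j - 1) = p j - r j" using rp by (simp add: field_simps)
    ultimately show ?thesis by (simp add: right_diff_distrib)
  qed
  then have "(\<Sum>j=1..h. r j * ln (p j) - r j * ln (r j)) \<le> (\<Sum>j=1..h. p j - r j)" by (intro sum_mono)
  then show ?thesis using assms by (simp add: sum_subtractf)
qed

end


context emloc begin

abbreviation f where "f p j \<equiv> p j ^ xi j * S p j ^ zeta j"

lemma S_mid: "S (\<lambda>j. (P j + q j) / 2) k = (S P k + S q k) / 2"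
proof -
  have "(\<Sum>l=k..h. (P l + q l) / 2 / W (t l)) = (\<Sum>l=k..h. (P l / W (t l) + q l / W (t l)) / 2)"
    by (intro sum.cong refl) (simp add: add_divide_distrib divide_divide_eq_left mult.commute)
  then show ?thesis unfolding em_tail_def by (simp add: sum.distrib sum_divide_distrib[symmetric])
qed

lemma uniq:
  assumes Pin: "P \<in> em_simplex h" and Ppos: "pos P"
    and Pmax: "\<forall>q\<in>em_simplex h. L q \<le> L P"
    and qin: "q \<in> em_simplex h" and qge: "L P \<le> L q"
  shows "\<forall>j\<in>{1..h}. q j = P j"
proof -
  define m where "m = (\<lambda>j. (P j + q j) / 2)"
  have Pn: "\<forall>j\<in>{1..h}. 0 \<le> P j" using Ppos by (auto simp: pos_def less_imp_le)
  have qn: "\<forall>j\<in>{1..h}. 0 \<le> q j" using qin by (simp add: em_simplex_def)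
  have min: "m \<in> em_simplex h"
    using Pin qin unfolding em_simplex_def m_def by (auto simp: sum.distrib sum_divide_distrib[symmetric])
  have LPpos: "0 < L P" using L_pos Ppos by auto
  have Sm: "S m k = (S P k + S q k) / 2" for k unfolding m_def by (rule S_mid)
  have fle: "f P j * f q j \<le> (f m j)^2" if j: "j \<in> {1..h}" for j
  proof -
    have a1: "P j * q j \<le> (m j)^2" unfolding m_def
    proof -
      have "0 \<le> ((P j - q j) / 2)^2" by simp
      then show "P j * q j \<le> ((P j + q j) / 2)^2" by (simp add: power2_eq_square field_simps)
    qed
    have a2: "S P j * S q j \<le> (S m j)^2" unfolding Sm
    proof -
      have "0 \<le> ((S P j - S q j) / 2)^2" by simp
      then show "S P j * S q j \<le> ((S P j + S q j) / 2)^2" by (simp add: power2_eq_square field_simps)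
    qed
    have b1: "0 \<le> P j * q j" using Pn qn j by simp
    have b2: "0 \<le> S P j * S q j" using S_nonneg Pn qn j by simp
    have "f P j * f q j = (P j * q j) ^ xi j * (S P j * S q j) ^ zeta j"
      by (simp add: power_mult_distrib)
    also have "\<dots> \<le> ((m j)^2) ^ xi j * ((S m j)^2) ^ zeta j"
    proof (rule mult_mono)
      show "(P j * q j) ^ xi j \<le> ((m j)^2) ^ xi j" using a1 b1 by (rule power_mono)
      show "(S P j * S q j) ^ zeta j \<le> ((S m j)^2) ^ zeta j" using a2 b2 by (rule power_mono)
    qed (auto simp: b1 b2)
    also have "\<dots> = (f m j)^2" by (simp add: power_mult_distrib power_mult[symmetric] mult.commute)
    finally show ?thesis .
  qed
  have Lm: "L m \<le> L P" using Pmax min by auto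
  have Lm0: "0 \<le> L m" unfolding em_lik_def using min S_nonneg
    by (intro prod_nonneg mult_nonneg_nonneg zero_le_power) (auto simp: em_simplex_def)
  have e1: "L P * L q = (\<Prod>j=1..h. f P j * f q j)" unfolding em_lik_def by (simp add: prod.distrib)
  have e2: "(\<Prod>j=1..h. (f m j)^2) = (L m)^2" unfolding em_lik_def by (simp add: prod_power_distrib)
  have "L P * L q = (\<Prod>j=1..h. f P j * f q j)" by (rule e1)
  also have "\<dots> \<le> (\<Prod>j=1..h. (f m j)^2)"
    using fle Pn qn S_nonneg by (intro prod_mono) (auto intro!: mult_nonneg_nonneg zero_le_power)
  also have "\<dots> = (L m)^2" unfolding em_lik_def by (simp add: prod_power_distrib)
  finally have c1: "L P * L q \<le> (L m)^2" .
  have c2: "(L m)^2 \<le> L P * L q"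
  proof -
    have "(L m)^2 \<le> (L P)^2" using Lm Lm0 by (intro power_mono) auto
    also have "\<dots> \<le> L P * L q" using qge LPpos by (simp add: power2_eq_square)
    finally show ?thesis .
  qed
  have Lq: "0 < L q" using qge LPpos by simp
  have peq: "(\<Prod>j=1..h. f P j * f q j) = (\<Prod>j=1..h. (f m j)^2)"
    using c1 c2 e1 e2 by linarith
  have pospr: "0 < f P j * f q j" if j: "j \<in> {1..h}" for j
  proof -
    have "L P * L q \<noteq> 0" using LPpos Lq by simp
    then have "(\<Prod>j=1..h. f P j * f q j) \<noteq> 0" using e1 by simp
    then have "f P j * f q j \<noteq> 0" using j by (simp add: prod_zero_iff)
    moreover have "0 \<le> f P j * f q j" using Pn qn S_nonneg j by (auto intro!: mult_nonneg_nonneg zero_le_power)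
    ultimately show ?thesis by linarith
  qed
  have feq: "\<forall>j\<in>{1..h}. f P j * f q j = (f m j)^2"
    using prod_eq_factors[of "{1..h}" "\<lambda>j. f P j * f q j" "\<lambda>j. (f m j)^2"] pospr fle peq by auto
  have comp: "(xi j > 0 \<longrightarrow> q j = P j) \<and> (zeta j > 0 \<longrightarrow> S q j = S P j)" if j: "j \<in> {1..h}" for j
  proof -
    have e: "(P j * q j) ^ xi j * (S P j * S q j) ^ zeta j = ((m j)^2) ^ xi j * ((S m j)^2) ^ zeta j"
      using feq j by (simp add: power_mult_distrib power_mult[symmetric] mult_ac)
    have a1: "P j * q j \<le> (m j)^2" unfolding m_def
    proof -
      have "0 \<le> ((P j - q j) / 2)^2" by simp
      then show "P j * q j \<le> ((P j + q j) / 2)^2" by (simp add: power2_eq_square field_simps)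
    qed
    have a2: "S P j * S q j \<le> (S m j)^2" unfolding Sm
    proof -
      have "0 \<le> ((S P j - S q j) / 2)^2" by simp
      then show "S P j * S q j \<le> ((S P j + S q j) / 2)^2" by (simp add: power2_eq_square field_simps)
    qed
    have b1: "0 \<le> P j * q j" using Pn qn j by simp
    have b2: "0 \<le> S P j * S q j" using S_nonneg Pn qn j by simp
    have pp: "0 < (P j * q j) ^ xi j * (S P j * S q j) ^ zeta j"
      using pospr[OF j] by (simp add: power_mult_distrib mult_ac)
    have p1: "0 < (P j * q j) ^ xi j"
    proof -
      have "(P j * q j) ^ xi j \<noteq> 0"
      proof
        assume "(P j * q j) ^ xi j = 0" then show False using pp by (simp only: mult_zero_left less_irrefl)
      qed
      moreover have "0 \<le> (P j * q j) ^ xi j" using b1 by simp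
      ultimately show ?thesis by linarith
    qed
    have p2: "0 < (S P j * S q j) ^ zeta j"
    proof -
      have "(S P j * S q j) ^ zeta j \<noteq> 0"
      proof
        assume "(S P j * S q j) ^ zeta j = 0" then show False using pp by (simp only: mult_zero_right less_irrefl)
      qed
      moreover have "0 \<le> (S P j * S q j) ^ zeta j" using b2 by simp
      ultimately show ?thesis by linarith
    qed
    have "(P j * q j) ^ xi j = ((m j)^2) ^ xi j \<and> (S P j * S q j) ^ zeta j = ((S m j)^2) ^ zeta j"
    proof (rule eq2[OF p1 _ p2 _ e])
      show "(P j * q j) ^ xi j \<le> ((m j)^2) ^ xi j" using a1 b1 by (rule power_mono)
      show "(S P j * S q j) ^ zeta j \<le> ((S m j)^2) ^ zeta j" using a2 b2 by (rule power_mono)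
    qed
    then have r1: "(P j * q j) ^ xi j = ((m j)^2) ^ xi j" and r2: "(S P j * S q j) ^ zeta j = ((S m j)^2) ^ zeta j"
      by auto
    show ?thesis
    proof (intro conjI impI)
      assume "0 < xi j"
      then have "P j * q j = (m j)^2" using r1 b1 by (simp add: power_eq_iff_eq_base)
      then have "((P j - q j) / 2)^2 = 0" unfolding m_def by (simp add: power2_eq_square field_simps)
      then show "q j = P j" by simp
    next
      assume "0 < zeta j"
      then have "S P j * S q j = (S m j)^2" using r2 b2 by (simp add: power_eq_iff_eq_base)
      then have "((S P j - S q j) / 2)^2 = 0" unfolding Sm by (simp add: power2_eq_square field_simps)
      then show "S q j = S P j" by simp
    qed
  qed
  have R: "\<forall>l\<in>{j..h}. 1 \<le> l \<longrightarrow> q l = P l" if "j \<le> Suc h" for j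
    using that
  proof (induction j rule: inc_induct)
    case base then show ?case by simp
  next
    case (step n)
    show ?case
    proof (cases "n = 0")
      case True then show ?thesis using step.IH by (metis atLeastAtMost_iff not_less_eq_eq le_antisym One_nat_def)
    next
      case nz: False
    have n: "n \<in> {1..h}" using step nz by auto
    have "q n = P n"
    proof (cases "xi n > 0")
      case True then show ?thesis using comp n by auto
    next
      case False
      then have "zeta n > 0" using obs[OF n] by simp
      then have "S q n = S P n" using comp n by auto
      moreover have "S q n = q n / W (t n) + (\<Sum>l=Suc n..h. q l / W (t l))"
        unfolding em_tail_def using n by (simp add: sum.atLeast_Suc_atMost)
      moreover have "S P n = P n / W (t n) + (\<Sum>l=Suc n..h. P l / W (t l))"
        unfolding em_tail_def using n by (simp add: sum.atLeast_Suc_atMost)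
      moreover have "(\<Sum>l=Suc n..h. q l / W (t l)) = (\<Sum>l=Suc n..h. P l / W (t l))"
        using step.IH by (intro sum.cong refl) auto
      ultimately have "q n / W (t n) = P n / W (t n)" by simp
      then show ?thesis using Wp[OF n] by simp
    qed
    then show ?thesis using step.IH by (metis atLeastAtMost_iff le_antisym not_less_eq_eq)
    qed
  qed
  show ?thesis using R[of 1] by auto
qed

end

context emloc begin

lemma iter_in: assumes "pos p0" "(\<Sum>j=1..h. p0 j) = 1" "1 \<le> h"
  shows "pos ((T ^^ n) p0) \<and> (\<Sum>j=1..h. (T ^^ n) p0 j) = 1"
proof (induction n)
  case 0 then show ?case using assms by simp
next
  case (Suc n)
  then show ?case using T_pos T_sum assms by (auto simp: pos_def)
qed

lemma pos_simplex: assumes "pos p" "(\<Sum>j=1..h. p j) = 1" shows "p \<in> em_simplex h"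
  using assms by (auto simp: pos_def em_simplex_def less_imp_le)

lemma L_tendsto: assumes "\<forall>j\<in>{1..h}. (\<lambda>n. X n j) \<longlonglongrightarrow> q j"
  shows "(\<lambda>n. L (X n)) \<longlonglongrightarrow> L q"
proof -
  have w: "\<forall>l\<in>{1..h}. W (t l) \<noteq> 0" using Wp by (metis less_irrefl)
  show ?thesis
  unfolding em_lik_def em_tail_def using assms w
  by (intro tendsto_prod tendsto_mult tendsto_power tendsto_sum tendsto_divide tendsto_const) auto
qed

lemma L_lim:
  assumes Pin: "P \<in> em_simplex h" and Ppos: "pos P"
    and Pmax: "\<forall>q\<in>em_simplex h. L q \<le> L P"
    and p0: "pos p0" "(\<Sum>j=1..h. p0 j) = 1" and h: "1 \<le> h"
  shows "(\<lambda>n. L ((T ^^ n) p0)) \<longlonglongrightarrow> L P"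
proof -
  define pn where "pn n = (T ^^ n) p0" for n
  define r where "r = T P"
  define V where "V p = - (\<Sum>j=1..h. r j * ln (p j))" for p
  define d where "d n = ln (L P) - ln (L (pn n))" for n
  have Psum: "(\<Sum>j=1..h. P j) = 1" using Pin by (simp add: em_simplex_def)
  have rpos: "pos r" unfolding r_def using T_pos Ppos by (auto simp: pos_def)
  have rsum: "(\<Sum>j=1..h. r j) = 1" unfolding r_def using T_sum Ppos Psum h by auto
  have pn: "pos (pn n)" "(\<Sum>j=1..h. pn n j) = 1" for n unfolding pn_def using iter_in p0 h by auto
  have Np: "0 < N" using N_pos h by auto
  have d0: "0 \<le> d n" for n
  proof -
    have "L (pn n) \<le> L P" using Pmax pos_simplex pn by auto
    moreover have "0 < L (pn n)" using L_pos pn(1) by blast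
    ultimately show ?thesis unfolding d_def by simp
  qed
  have dstep: "d n \<le> N * (V (pn n) - V (pn (Suc n)))" for n
  proof -
    have "d n \<le> N * (\<Sum>j=1..h. r j * (ln (T (pn n) j) - ln (pn n j)))"
      unfolding d_def r_def using key[OF Ppos Psum pn(1) pn(2) h] .
    also have "\<dots> = N * (V (pn n) - V (pn (Suc n)))"
      unfolding V_def pn_def by (simp add: sum_subtractf right_diff_distrib)
    finally show ?thesis .
  qed
  have tele: "(\<Sum>i<M. d i) \<le> N * (V (pn 0) - V (pn M))" for M
  proof (induction M)
    case 0 then show ?case by simp
  next
    case (Suc M)
    have "(\<Sum>i<Suc M. d i) = (\<Sum>i<M. d i) + d M" by simp
    also have "\<dots> \<le> N * (V (pn 0) - V (pn M)) + N * (V (pn M) - V (pn (Suc M)))"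
      using Suc dstep by (intro add_mono) auto
    also have "\<dots> = N * (V (pn 0) - V (pn (Suc M)))" by (simp add: algebra_simps)
    finally show ?case .
  qed
  have Vlow: "- (\<Sum>j=1..h. r j * ln (r j)) \<le> V (pn M)" for M
    unfolding V_def using gibbs[OF rpos pn(1) rsum pn(2)] by simp
  have "(\<Sum>i<M. d i) \<le> N * (V (pn 0) + (\<Sum>j=1..h. r j * ln (r j)))" for M
  proof -
    have "(\<Sum>i<M. d i) \<le> N * (V (pn 0) - V (pn M))" by (rule tele)
    also have "\<dots> \<le> N * (V (pn 0) + (\<Sum>j=1..h. r j * ln (r j)))"
      using Vlow[of M] Np by (intro mult_left_mono) auto
    finally show ?thesis .
  qed
  then have "summable d" using d0 by (intro summableI_nonneg_bounded) auto
  then have "d \<longlonglongrightarrow> 0" by (rule summable_LIMSEQ_zero)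
  then have "(\<lambda>n. ln (L P) - d n) \<longlonglongrightarrow> ln (L P) - 0" by (intro tendsto_diff tendsto_const)
  then have "(\<lambda>n. ln (L (pn n))) \<longlonglongrightarrow> ln (L P)" unfolding d_def by simp
  then have "(\<lambda>n. exp (ln (L (pn n)))) \<longlonglongrightarrow> exp (ln (L P))" by (rule tendsto_exp)
  then show ?thesis unfolding pn_def using L_pos Ppos pn unfolding pn_def by simp
qed

end

context emloc begin

lemma conv:
  assumes Pin: "P \<in> em_simplex h" and Ppos: "pos P"
    and Pmax: "\<forall>q\<in>em_simplex h. L q \<le> L P"
    and p0: "pos p0" "(\<Sum>j=1..h. p0 j) = 1"
  shows "\<forall>j\<in>{1..h}. (\<lambda>k. (T ^^ k) p0 j) \<longlonglongrightarrow> P j"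
proof
  fix j0 assume j0: "j0 \<in> {1..h}"
  then have h: "1 \<le> h" by auto
  define pn where "pn n = (T ^^ n) p0" for n
  have pn: "pos (pn n)" "(\<Sum>j=1..h. pn n j) = 1" for n unfolding pn_def using iter_in p0 h by auto
  have bnd: "\<bar>pn n j\<bar> \<le> 1" if "j \<in> {1..h}" for n j
  proof -
    have "0 < pn n j" using pn(1) that by (auto simp: pos_def)
    moreover have "pn n j \<le> (\<Sum>j=1..h. pn n j)"
      using pn(1) that by (intro member_le_sum) (auto simp: pos_def less_imp_le)
    ultimately show ?thesis using pn(2)[of n] by simp
  qed
  have LL: "(\<lambda>n. L (pn n)) \<longlonglongrightarrow> L P" unfolding pn_def by (rule L_lim[OF Pin Ppos Pmax p0 h])
  show "(\<lambda>k. (T ^^ k) p0 j0) \<longlonglongrightarrow> P j0"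
  proof (rule ccontr)
    assume nc: "\<not> (\<lambda>k. (T ^^ k) p0 j0) \<longlonglongrightarrow> P j0"
    have "\<not> (\<forall>r>0. \<exists>no. \<forall>n\<ge>no. dist (pn n j0) (P j0) < r)" using nc unfolding LIMSEQ_def pn_def .
    then obtain e where e0: "0 < e" and e1: "\<not> (\<exists>no. \<forall>n\<ge>no. dist (pn n j0) (P j0) < e)" by blast
    have e2: "\<forall>M. \<exists>n\<ge>M. e \<le> \<bar>pn n j0 - P j0\<bar>" using e1 by (auto simp: dist_real_def not_less)
    note e = e0 e2
    have "infinite {n. e \<le> \<bar>pn n j0 - P j0\<bar>}"
      using e(2) by (simp add: infinite_nat_iff_unbounded_le)
    from infinite_enumerate[OF this] obtain \<sigma> :: "nat \<Rightarrow> nat" where \<sigma>: "strict_mono \<sigma>"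
      "\<forall>n. \<sigma> n \<in> {n. e \<le> \<bar>pn n j0 - P j0\<bar>}" by blast
    then have \<sigma>2: "\<forall>n. e \<le> \<bar>pn (\<sigma> n) j0 - P j0\<bar>" by simp
    define X where "X n j = (if j \<in> {1..h} then pn (\<sigma> n) j else 0)" for n j
    have "\<forall>n j. \<bar>X n j\<bar> \<le> 1" unfolding X_def using bnd by auto
    then obtain r :: "nat \<Rightarrow> nat" where r: "strict_mono r" "\<forall>j\<le>h. convergent (\<lambda>n. X (r n) j)"
      using bw_multi by blast
    define q where "q j = lim (\<lambda>n. X (r n) j)" for j
    have qlim: "(\<lambda>n. pn (\<sigma> (r n)) j) \<longlonglongrightarrow> q j" if j: "j \<in> {1..h}" for j
    proof -
      have "(\<lambda>n. X (r n) j) \<longlonglongrightarrow> q j" unfolding q_def using r(2) j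
        by (simp add: convergent_LIMSEQ_iff)
      then show ?thesis unfolding X_def using j by simp
    qed
    have qnn: "0 \<le> q j" if j: "j \<in> {1..h}" for j
      using qlim[OF j] pn(1) j by (intro LIMSEQ_le_const[of _ _ 0]) (auto simp: pos_def less_imp_le)
    have "(\<lambda>n. \<Sum>j=1..h. pn (\<sigma> (r n)) j) \<longlonglongrightarrow> (\<Sum>j=1..h. q j)"
      using qlim by (intro tendsto_sum) auto
    then have qsum: "(\<Sum>j=1..h. q j) = 1" using pn(2) by (simp add: LIMSEQ_const_iff)
    have qin: "q \<in> em_simplex h" using qnn qsum by (auto simp: em_simplex_def)
    have L1: "(\<lambda>n. L (pn (\<sigma> (r n)))) \<longlonglongrightarrow> L q" using qlim by (intro L_tendsto) auto
    have "((\<lambda>n. L (pn n)) \<circ> (\<sigma> \<circ> r)) \<longlonglongrightarrow> L P"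
      using LL strict_mono_o[OF \<sigma>(1) r(1)] by (rule LIMSEQ_subseq_LIMSEQ)
    then have L2: "(\<lambda>n. L (pn (\<sigma> (r n)))) \<longlonglongrightarrow> L P" by (simp add: o_def)
    have "L q = L P" using L1 L2 by (rule LIMSEQ_unique)
    then have "\<forall>j\<in>{1..h}. q j = P j" using uniq[OF Pin Ppos Pmax qin] by simp
    then have qj0: "q j0 = P j0" using j0 by auto
    have "(\<lambda>n. \<bar>pn (\<sigma> (r n)) j0 - P j0\<bar>) \<longlonglongrightarrow> \<bar>q j0 - P j0\<bar>"
      using qlim[OF j0] by (intro tendsto_rabs tendsto_diff tendsto_const)
    then have "e \<le> \<bar>q j0 - P j0\<bar>" using \<sigma>2 by (intro LIMSEQ_le_const) auto
    then show False using qj0 e(1) by simp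
  qed
qed

end

theorem mainTheorem3:
  fixes h :: nat and t :: "nat \<Rightarrow> real" and W :: "real \<Rightarrow> real"
    and xi zeta :: "nat \<Rightarrow> nat" and pstar p0 :: "nat \<Rightarrow> real"
  assumes t_pos: "0 < t 1"
    and t_mono: "\<forall>i\<in>{1..h}. \<forall>j\<in>{1..h}. i < j \<longrightarrow> t i < t j"
    and W_pos: "\<forall>x>0. 0 < W x"
    and W_mono: "mono_on {0<..} W"
    and obs: "\<forall>j\<in>{1..h}. 1 \<le> xi j + zeta j"
    and pstar_in: "pstar \<in> em_simplex h"
    and pstar_max: "\<forall>q\<in>em_simplex h. em_lik h t W xi zeta q \<le> em_lik h t W xi zeta pstar"
    and pstar_pos: "\<forall>j\<in>{1..h}. 0 < pstar j"
    and p0_in: "p0 \<in> em_simplex h"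
    and p0_pos: "\<forall>j\<in>{1..h}. 0 < p0 j"
  shows "\<forall>j\<in>{1..h}. (\<lambda>k. ((em_T h t W xi zeta) ^^ k) p0 j) \<longlonglongrightarrow> pstar j"
proof -
  have Wp: "0 < W (t j)" if j: "j \<in> {1..h}" for j
  proof -
    have "0 < t j"
    proof (cases "j = 1")
      case True then show ?thesis using t_pos by simp
    next
      case False
      then have "t 1 < t j" using t_mono j by auto
      then show ?thesis using t_pos by linarith
    qed
    then show ?thesis using W_pos by blast
  qed
  interpret emloc h t W xi zeta
    using Wp obs by unfold_locales auto
  have Ppos: "pos pstar" using pstar_pos by (simp add: pos_def)
  have p0pos: "pos p0" using p0_pos by (simp add: pos_def)
  have p0sum: "(\<Sum>j=1..h. p0 j) = 1" using p0_in by (simp add: em_simplex_def)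
  show ?thesis using conv[OF pstar_in Ppos pstar_max p0pos p0sum] .
qed

end
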